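(* The space $(\mathbb{R}^{\mathbb{Z}_<},\tau_\iota)$ is first-countable but not second-countable.
   Context: $\mathbb{R}^{\mathbb{Z}_<}$ is the set of formal series $\sum_{i\ge -k}a_i\epsilon^i$ ($k\in\mathbb{N}\cup\{0\}$, $a_i\in\mathbb{R}$), with coefficientwise addition, Cauchy-product multiplication and lexicographic order; $|\cdot|$ is the associated absolute value, $d(\mathbf{x},\mathbf{y})=|\mathbf{y}-\mathbf{x}|$, $B_{\mathbf{x}}(\mathbf{y})=\{\mathbf{z}:d(\mathbf{x},\mathbf{z})<\mathbf{y}\}$. For $m\in\mathbb{N}\cup\{0\}$ let $\Delta^m=\{a\epsilon^m: a\in\mathbb{R}\}$ (with $a\neq0$ when $m\ge1$) and $\Delta^{\downarrow m}=\bigcup_{n\ge m}\Delta^n$. A set $O$ is $\iota$-open iff for every $\mathbf{x}\in O$ there is a positive $\iota\in\Delta^{\downarrow m}$ (for some $m$) with $B_{\mathbf{x}}(\iota)\subseteq O$; $\tau_\iota$ is the topology generated by unions of such $\iota$-balls. *)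

theory Defs
  imports "HOL-Analysis.Analysis"
begin

text \<open>Elements of R^{Z_<}: formal series sum_{i >= -k} a_i eps^i, represented by their
  coefficient function int => real whose support is bounded below.\<close>

definition LC :: "(int \<Rightarrow> real) set" where
  "LC = {f. \<exists>k::nat. \<forall>i::int. i < - int k \<longrightarrow> f i = 0}"

definition lc_minus :: "(int \<Rightarrow> real) \<Rightarrow> (int \<Rightarrow> real) \<Rightarrow> (int \<Rightarrow> real)" where
  "lc_minus x y = (\<lambda>i. x i - y i)"

definition lc_uminus :: "(int \<Rightarrow> real) \<Rightarrow> (int \<Rightarrow> real)" where
  "lc_uminus x = (\<lambda>i. - x i)"

definition lc_pos :: "(int \<Rightarrow> real) \<Rightarrow> bool" where
  "lc_pos x \<longleftrightarrow> (\<exists>i. 0 < x i \<and> (\<forall>j<i. x j = 0))"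

definition lc_less :: "(int \<Rightarrow> real) \<Rightarrow> (int \<Rightarrow> real) \<Rightarrow> bool" where
  "lc_less x y \<longleftrightarrow> lc_pos (lc_minus y x)"

definition lc_abs :: "(int \<Rightarrow> real) \<Rightarrow> (int \<Rightarrow> real)" where
  "lc_abs x = (if lc_pos (lc_uminus x) then lc_uminus x else x)"

definition lc_dist :: "(int \<Rightarrow> real) \<Rightarrow> (int \<Rightarrow> real) \<Rightarrow> (int \<Rightarrow> real)" where
  "lc_dist x y = lc_abs (lc_minus y x)"

definition lc_ball :: "(int \<Rightarrow> real) \<Rightarrow> (int \<Rightarrow> real) \<Rightarrow> (int \<Rightarrow> real) set" where
  "lc_ball x r = {z \<in> LC. lc_less (lc_dist x z) r}"

definition lc_mono :: "real \<Rightarrow> int \<Rightarrow> (int \<Rightarrow> real)" where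
  "lc_mono a m = (\<lambda>i. if i = m then a else 0)"

definition Delta :: "nat \<Rightarrow> (int \<Rightarrow> real) set" where
  "Delta m = {lc_mono a (int m) | a. m \<ge> 1 \<longrightarrow> a \<noteq> 0}"

definition Delta_down :: "nat \<Rightarrow> (int \<Rightarrow> real) set" where
  "Delta_down m = (\<Union>n\<in>{m..}. Delta n)"

definition iota_open :: "(int \<Rightarrow> real) set \<Rightarrow> bool" where
  "iota_open U \<longleftrightarrow> U \<subseteq> LC \<and>
     (\<forall>x\<in>U. \<exists>m \<iota>. \<iota> \<in> Delta_down m \<and> lc_pos \<iota> \<and> lc_ball x \<iota> \<subseteq> U)"

definition tau_iota :: "(int \<Rightarrow> real) topology" where
  "tau_iota = topology iota_open"

end

theory Submission
  imports Defs
begin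

definition SN :: "(int \<Rightarrow> real) \<Rightarrow> nat \<Rightarrow> real \<Rightarrow> (int \<Rightarrow> real) set" where
  "SN x n a = {z \<in> LC. (\<forall>j<int n. z j = x j) \<and> \<bar>z (int n) - x (int n)\<bar> < a}"

lemma abs_pt: "\<bar>lc_abs d j\<bar> = \<bar>d j\<bar>"
  by (simp add: lc_abs_def lc_uminus_def)

lemma abs_lowest:
  assumes "\<forall>j<i. lc_abs d j = 0" "lc_abs d i \<noteq> 0"
  shows "lc_abs d i > 0"
proof (cases "lc_pos (lc_uminus d)")
  case True
  then obtain i' where i': "0 < - d i'" "\<forall>j<i'. - d j = 0"
    unfolding lc_pos_def lc_uminus_def by auto
  have e: "lc_abs d = lc_uminus d" using True by (simp add: lc_abs_def)
  show ?thesis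
  proof (cases "i' < i")
    case True then show ?thesis using assms(1) i' e by (auto simp: lc_uminus_def)
  next
    case False
    show ?thesis
    proof (cases "i < i'")
      case True then show ?thesis using assms(2) i' e by (auto simp: lc_uminus_def)
    next
      case False then have "i = i'" using \<open>\<not> i' < i\<close> by auto
      then show ?thesis using i' e by (simp add: lc_uminus_def)
    qed
  qed
next
  case False
  have e: "lc_abs d = d" using False by (simp add: lc_abs_def)
  show ?thesis
  proof (rule ccontr)
    assume "\<not> ?thesis"
    then have "d i < 0" using assms(2) e by auto
    then have "lc_pos (lc_uminus d)" unfolding lc_pos_def lc_uminus_def
      using assms(1) e by (intro exI[of _ i]) auto
    then show False using False by simp
  qed
qed

lemma ball_sub:
  assumes "c > 0" and "z \<in> lc_ball y (lc_mono c (int n))"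
  shows "z \<in> LC \<and> (\<forall>j<int n. z j = y j) \<and> \<bar>z (int n) - y (int n)\<bar> \<le> c"
proof -
  define d where "d = lc_minus z y"
  define e where "e = lc_abs d"
  have z: "z \<in> LC" and p: "lc_pos (lc_minus (lc_mono c (int n)) e)"
    using assms(2) by (auto simp: lc_ball_def lc_less_def lc_dist_def d_def e_def)
  then obtain i where i: "0 < lc_mono c (int n) i - e i"
    "\<forall>j<i. lc_mono c (int n) j - e j = 0"
    unfolding lc_pos_def lc_minus_def by auto
  have ed: "\<bar>e j\<bar> = \<bar>z j - y j\<bar>" for j
    using abs_pt[of d j] by (simp add: e_def d_def lc_minus_def)
  have "i \<ge> int n"
  proof (rule ccontr)
    assume "\<not> ?thesis"
    then have "\<forall>j<i. e j = 0" "e i \<noteq> 0" using i by (auto simp: lc_mono_def)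
    then have "e i > 0" using abs_lowest[of i d] by (simp add: e_def)
    then show False using i(1) \<open>\<not> i \<ge> int n\<close> by (auto simp: lc_mono_def)
  qed
  have low: "\<forall>j<int n. e j = 0"
  proof (intro allI impI)
    fix j assume jn: "j < int n"
    then have "j < i" using \<open>i \<ge> int n\<close> by simp
    then show "e j = 0" using i(2) jn by (auto simp: lc_mono_def)
  qed
  have "\<bar>e (int n)\<bar> \<le> c"
  proof (cases "i = int n")
    case True
    then have "e (int n) < c" using i(1) by (simp add: lc_mono_def)
    moreover have "e (int n) \<ge> 0"
    proof (cases "e (int n) = 0")
      case False
      then show ?thesis using abs_lowest[of "int n" d] low unfolding e_def by force
    qed simp
    ultimately show ?thesis by simp
  next
    case False
    then have "int n < i" using \<open>i \<ge> int n\<close> by simp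
    then have "e (int n) = c" using i(2) by (auto simp: lc_mono_def)
    then show ?thesis using assms(1) by simp
  qed
  moreover have "\<forall>j<int n. z j = y j"
  proof (intro allI impI)
    fix j assume "j < int n"
    then have "\<bar>z j - y j\<bar> = 0" using low ed[of j] by simp
    then show "z j = y j" by simp
  qed
  ultimately show ?thesis using z ed[of "int n"] by simp
qed

lemma SN_sub_ball:
  assumes "a > 0"
  shows "SN x n a \<subseteq> lc_ball x (lc_mono a (int n))"
proof
  fix z assume z: "z \<in> SN x n a"
  define e where "e = lc_abs (lc_minus z x)"
  have ed: "\<bar>e j\<bar> = \<bar>z j - x j\<bar>" for j
    using abs_pt[of "lc_minus z x" j] by (simp add: e_def lc_minus_def)
  have "lc_pos (lc_minus (lc_mono a (int n)) e)"
    unfolding lc_pos_def lc_minus_def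
  proof (intro exI[of _ "int n"] conjI allI impI)
    show "0 < lc_mono a (int n) (int n) - e (int n)"
      using z ed[of "int n"] by (auto simp: SN_def lc_mono_def)
    fix j assume "j < int n"
    then show "lc_mono a (int n) j - e j = 0"
      using z ed[of j] by (auto simp: SN_def lc_mono_def)
  qed
  then show "z \<in> lc_ball x (lc_mono a (int n))"
    using z by (simp add: lc_ball_def lc_less_def lc_dist_def e_def SN_def)
qed

lemma SN_mono: "SN x (Suc m) 1 \<subseteq> SN x m a" if "a > 0"
  using that by (auto simp: SN_def)

lemma SN_le: "m \<le> k \<Longrightarrow> SN x k 1 \<subseteq> SN x m 1"
proof
  fix z assume mk: "m \<le> k" and z: "z \<in> SN x k 1"
  show "z \<in> SN x m 1"
  proof (cases "m = k")
    case True then show ?thesis using z by simp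
  next
    case False
    then have "int m < int k" using mk by simp
    then show ?thesis using z mk by (auto simp: SN_def)
  qed
qed

lemma iota_open_char:
  "iota_open U \<longleftrightarrow> U \<subseteq> LC \<and> (\<forall>x\<in>U. \<exists>n. SN x n 1 \<subseteq> U)"
proof
  assume A: "iota_open U"
  show "U \<subseteq> LC \<and> (\<forall>x\<in>U. \<exists>n. SN x n 1 \<subseteq> U)"
  proof (intro conjI ballI)
    show "U \<subseteq> LC" using A by (simp add: iota_open_def)
    fix x assume "x \<in> U"
    then obtain m \<iota> where m: "\<iota> \<in> Delta_down m" "lc_pos \<iota>" "lc_ball x \<iota> \<subseteq> U"
      using A by (auto simp: iota_open_def)
    then obtain k a where ka: "\<iota> = lc_mono a (int k)"
      by (auto simp: Delta_down_def Delta_def)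
    have "a > 0" using m(2) ka unfolding lc_pos_def lc_mono_def by (auto split: if_splits)
    then have "SN x (Suc k) 1 \<subseteq> U"
      using SN_mono[of a x k] SN_sub_ball[of a x k] m(3) ka by blast
    then show "\<exists>n. SN x n 1 \<subseteq> U" by blast
  qed
next
  assume A: "U \<subseteq> LC \<and> (\<forall>x\<in>U. \<exists>n. SN x n 1 \<subseteq> U)"
  show "iota_open U" unfolding iota_open_def
  proof (intro conjI ballI)
    show "U \<subseteq> LC" using A by simp
    fix x assume "x \<in> U"
    then obtain n where n: "SN x n 1 \<subseteq> U" using A by blast
    have "lc_mono (1/2) (int n) \<in> Delta n"
      unfolding Delta_def by (intro CollectI exI[of _ "1/2"]) simp
    then have mem: "lc_mono (1/2) (int n) \<in> Delta_down n"
      unfolding Delta_down_def by blast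
    have pos: "lc_pos (lc_mono (1/2) (int n))"
      unfolding lc_pos_def lc_mono_def by (intro exI[of _ "int n"]) auto
    have "lc_ball x (lc_mono (1/2) (int n)) \<subseteq> SN x n 1"
      using ball_sub[of "1/2" _ x n] by (fastforce simp: SN_def)
    then show "\<exists>m \<iota>. \<iota> \<in> Delta_down m \<and> lc_pos \<iota> \<and> lc_ball x \<iota> \<subseteq> U"
      using mem pos n by blast
  qed
qed

lemma istop: "istopology iota_open"
  unfolding istopology_def iota_open_char
proof (intro conjI allI impI ballI)
  fix S T assume S: "S \<subseteq> LC \<and> (\<forall>x\<in>S. \<exists>n. SN x n 1 \<subseteq> S)"
    and T: "T \<subseteq> LC \<and> (\<forall>x\<in>T. \<exists>n. SN x n 1 \<subseteq> T)"
  show "S \<inter> T \<subseteq> LC" using S by auto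
  fix x assume "x \<in> S \<inter> T"
  then obtain n1 n2 where "SN x n1 1 \<subseteq> S" "SN x n2 1 \<subseteq> T" using S T by blast
  moreover have "SN x (max n1 n2) 1 \<subseteq> SN x n1 1" "SN x (max n1 n2) 1 \<subseteq> SN x n2 1"
    using SN_le by auto
  ultimately show "\<exists>n. SN x n 1 \<subseteq> S \<inter> T" by blast
next
  fix K :: "(int \<Rightarrow> real) set set"
  assume K: "\<forall>k\<in>K. k \<subseteq> LC \<and> (\<forall>x\<in>k. \<exists>n. SN x n 1 \<subseteq> k)"
  show "\<Union>K \<subseteq> LC" using K by auto
  fix x assume "x \<in> \<Union>K"
  then obtain k where k: "k \<in> K" "x \<in> k" by blast
  then obtain n where "SN x n 1 \<subseteq> k" using K by blast
  then have "SN x n 1 \<subseteq> \<Union>K" using k(1) by blast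
  then show "\<exists>n. SN x n 1 \<subseteq> \<Union>K" by (rule exI)
qed

lemma openin_tau: "openin tau_iota U \<longleftrightarrow> iota_open U"
  by (simp add: tau_iota_def istop)

lemma SN_open: "iota_open (SN x n 1)"
  unfolding iota_open_char
proof (intro conjI ballI)
  show "SN x n 1 \<subseteq> LC" by (auto simp: SN_def)
  fix y assume y: "y \<in> SN x n 1"
  have "SN y (Suc n) 1 \<subseteq> SN x n 1"
  proof
    fix z assume z: "z \<in> SN y (Suc n) 1"
    then have "\<forall>j\<le>int n. z j = y j" by (auto simp: SN_def)
    then show "z \<in> SN x n 1" using y z by (auto simp: SN_def)
  qed
  then show "\<exists>m. SN y m 1 \<subseteq> SN x n 1" by blast
qed

lemma topspace_tau: "topspace tau_iota \<subseteq> LC"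
  by (auto simp: topspace_def openin_tau iota_open_def)

theorem mainTheorem4:
  shows "first_countable tau_iota \<and> \<not> second_countable tau_iota"
proof
  show "first_countable tau_iota"
    unfolding first_countable_def
  proof
    fix x assume "x \<in> topspace tau_iota"
    then have x: "x \<in> LC" using topspace_tau by auto
    show "\<exists>\<B>. countable \<B> \<and> (\<forall>V\<in>\<B>. openin tau_iota V) \<and>
             (\<forall>U. openin tau_iota U \<and> x \<in> U \<longrightarrow> (\<exists>V\<in>\<B>. x \<in> V \<and> V \<subseteq> U))"
    proof (intro exI[of _ "range (\<lambda>n. SN x n 1)"] conjI allI impI)
      show "countable (range (\<lambda>n. SN x n 1))" by simp
      show "\<forall>V\<in>range (\<lambda>n. SN x n 1). openin tau_iota V"
        using SN_open by (auto simp: openin_tau)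
      fix U assume "openin tau_iota U \<and> x \<in> U"
      then obtain n where "SN x n 1 \<subseteq> U" by (auto simp: openin_tau iota_open_char)
      moreover have "x \<in> SN x n 1" using x by (simp add: SN_def)
      ultimately show "\<exists>V\<in>range (\<lambda>n. SN x n 1). x \<in> V \<and> V \<subseteq> U" by blast
    qed
  qed
  show "\<not> second_countable tau_iota"
  proof
    assume "second_countable tau_iota"
    then obtain B where B: "countable B" "\<forall>V\<in>B. openin tau_iota V"
      "\<forall>U x. openin tau_iota U \<and> x \<in> U \<longrightarrow> (\<exists>V\<in>B. x \<in> V \<and> V \<subseteq> U)"
      unfolding second_countable_def by blast
    define p where "p t = lc_mono t 0" for t :: real
    have pLC: "p t \<in> LC" for t
      unfolding LC_def p_def lc_mono_def by (intro CollectI exI[of _ 0]) auto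
    have "\<forall>t. \<exists>V\<in>B. p t \<in> V \<and> V \<subseteq> SN (p t) 1 1"
    proof
      fix t
      have "p t \<in> SN (p t) 1 1" using pLC by (simp add: SN_def)
      then show "\<exists>V\<in>B. p t \<in> V \<and> V \<subseteq> SN (p t) 1 1"
        using B(3) SN_open openin_tau by blast
    qed
    then obtain f where f: "\<And>t. f t \<in> B" "\<And>t. p t \<in> f t" "\<And>t. f t \<subseteq> SN (p t) 1 1"
      by metis
    have "inj f"
    proof (rule injI)
      fix s t assume "f s = f t"
      then have "p s \<in> SN (p t) 1 1" using f(2)[of s] f(3)[of t] by auto
      then have "\<forall>j<int 1. p s j = p t j" by (simp add: SN_def)
      then have "p s 0 = p t 0" by (metis of_nat_1 zero_less_one)
      then show "s = t" by (simp add: p_def lc_mono_def)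
    qed
    have "countable (range f)"
      by (rule countable_subset[OF _ B(1)]) (auto intro: f(1))
    then have "countable (UNIV :: real set)"
      by (rule countable_image_inj_on) (rule \<open>inj f\<close>)
    then show False using uncountable_UNIV_real by simp
  qed
qed

end
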